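(* Let $\mathcal T$ be a triangulation of a surface $S$ of topological type $(g,n)$ and let $\Theta:E\to[0,\pi)$ satisfy $\mathbf{(C1)}$. In Euclidean background geometry, with the change of variables $u_i=\ln r_i$, the Jacobian matrix $(\partial K_i/\partial u_j)$ of the curvature map $u\mapsto(K_1,\dots,K_{|V|})$ on $\mathbb R^{|V|}$ is symmetric and positive semi-definite; moreover, restricted to the hyperplane $\Xi_d=\{u\in\mathbb R^{|V|}:\sum_{i}u_i=d\}$ (for any $d\in\mathbb R$) it is positive definite, i.e. $x^{T}(\partial K_i/\partial u_j)x>0$ for all non-zero $x$ with $\sum_i x_i=0$.
   Context: $S$: compact oriented surface of genus $g$ with $n\ge0$ boundary circles. $\mathcal T$: vertices $V=\{v_1,\dots,v_{|V|}\}$, edges $E$, boundary vertices $V_\partial$. $\mathbf{(C1)}$: whenever $e_1,e_2,e_3$ bound a triangle, $I(e_1)+I(e_2)I(e_3)\ge0$ and cyclic analogues, $I=\cos\Theta$. For $r\in\mathbb R_+^{|V|}$, each triangle $v_iv_jv_k$ is realized as the Euclidean triangle with sides $l_{ij}=\sqrt{r_i^2+r_j^2+2r_ir_j\cos\Theta([v_i,v_j])}$ etc., glued into a Euclidean cone metric; $\sigma(v_i)$ is the total angle at $v_i$; $K_i=2\pi-\sigma(v_i)$ for interior and $\pi-\sigma(v_i)$ for boundary vertices. *)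

theory Defs
  imports "HOL-Analysis.Analysis"
begin

text \<open>Faces are elements of a finite
set F of some type 'f; each face f has three corners 0,1,2 with vertices
vert f c and three sides; side c of f joins corner c and corner (c+1) mod 3
and carries the edge label edge f c.  Vertices are all elements of the finite
type 'v (so V = UNIV and |V| = CARD('v)).\<close>

definition nxt :: "nat \<Rightarrow> nat" where
  "nxt c = Suc c mod 3"

definition sides :: "'f set \<Rightarrow> ('f \<Rightarrow> nat \<Rightarrow> 'e) \<Rightarrow> 'e \<Rightarrow> ('f \<times> nat) set" where
  "sides F edge e = {(f, c). f \<in> F \<and> c < 3 \<and> edge f c = e}"

definition edge_set :: "'f set \<Rightarrow> ('f \<Rightarrow> nat \<Rightarrow> 'e) \<Rightarrow> 'e set" where
  "edge_set F edge = {edge f c | f c. f \<in> F \<and> c < 3}"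

definition face_adj :: "'f set \<Rightarrow> ('f \<Rightarrow> nat \<Rightarrow> 'e) \<Rightarrow> ('f \<times> 'f) set" where
  "face_adj F edge = {(f, g). f \<in> F \<and> g \<in> F \<and> (\<exists>c<3. \<exists>d<3. edge f c = edge g d)}"

text \<open>Corners at vertex v; two corners at v are adjacent in the link of v if
a side incident to the first corner and a side incident to the second corner
are the same edge (corner c is incident to sides c and (c+2) mod 3).\<close>
definition corners_at :: "'f set \<Rightarrow> ('f \<Rightarrow> nat \<Rightarrow> 'v) \<Rightarrow> 'v \<Rightarrow> ('f \<times> nat) set" where
  "corners_at F vert v = {(f, c). f \<in> F \<and> c < 3 \<and> vert f c = v}"

definition link_adj :: "'f set \<Rightarrow> ('f \<Rightarrow> nat \<Rightarrow> 'v) \<Rightarrow> ('f \<Rightarrow> nat \<Rightarrow> 'e) \<Rightarrow> 'v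
    \<Rightarrow> (('f \<times> nat) \<times> ('f \<times> nat)) set" where
  "link_adj F vert edge v =
     {((f, c), (g, d)). (f, c) \<in> corners_at F vert v \<and> (g, d) \<in> corners_at F vert v \<and>
        (\<exists>s\<in>{c, nxt (nxt c)}. \<exists>t\<in>{d, nxt (nxt d)}. (f, s) \<noteq> (g, t) \<and> edge f s = edge g t)}"

text \<open>A (combinatorial) triangulation of a compact connected oriented surface
with possibly nonempty boundary: every vertex lies on a face, every edge is a
side of exactly one (boundary edge) or two (interior edge) face sides, the two
sides of an interior edge are glued orientation-reversingly (coherent
orientation), the surface is connected, and the link of every vertex is
connected (a circle or an arc).\<close>
definition triangulation ::
  "'f set \<Rightarrow> ('f \<Rightarrow> nat \<Rightarrow> 'v) \<Rightarrow> ('f \<Rightarrow> nat \<Rightarrow> 'e) \<Rightarrow> bool" where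
  "triangulation F vert edge \<longleftrightarrow>
     finite F \<and> F \<noteq> {} \<and>
     (\<forall>v. \<exists>f\<in>F. \<exists>c<3. vert f c = v) \<and>
     (\<forall>e\<in>edge_set F edge. card (sides F edge e) = 1 \<or> card (sides F edge e) = 2) \<and>
     (\<forall>f\<in>F. \<forall>g\<in>F. \<forall>c<3. \<forall>d<3. edge f c = edge g d \<and> (f, c) \<noteq> (g, d) \<longrightarrow>
         vert f c = vert g (nxt d) \<and> vert f (nxt c) = vert g d) \<and>
     (\<forall>f\<in>F. \<forall>g\<in>F. (f, g) \<in> (face_adj F edge)\<^sup>*) \<and>
     (\<forall>v. \<forall>p\<in>corners_at F vert v. \<forall>q\<in>corners_at F vert v. (p, q) \<in> (link_adj F vert edge v)\<^sup>*)"

definition boundary_vertex ::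
  "'f set \<Rightarrow> ('f \<Rightarrow> nat \<Rightarrow> 'v) \<Rightarrow> ('f \<Rightarrow> nat \<Rightarrow> 'e) \<Rightarrow> 'v \<Rightarrow> bool" where
  "boundary_vertex F vert edge v \<longleftrightarrow>
     (\<exists>f\<in>F. \<exists>c<3. (vert f c = v \<or> vert f (nxt c) = v) \<and> card (sides F edge (edge f c)) = 1)"

text \<open>Condition (C1), with I = cos \<Theta>.\<close>
definition C1 :: "'f set \<Rightarrow> ('f \<Rightarrow> nat \<Rightarrow> 'e) \<Rightarrow> ('e \<Rightarrow> real) \<Rightarrow> bool" where
  "C1 F edge \<Theta> \<longleftrightarrow>
     (\<forall>f\<in>F. \<forall>c<3. cos (\<Theta> (edge f c)) + cos (\<Theta> (edge f (nxt c))) * cos (\<Theta> (edge f (nxt (nxt c)))) \<ge> 0)"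

definition edge_len :: "('e \<Rightarrow> real) \<Rightarrow> ('v \<Rightarrow> real) \<Rightarrow> 'v \<Rightarrow> 'v \<Rightarrow> 'e \<Rightarrow> real" where
  "edge_len \<Theta> r a b e = sqrt ((r a)\<^sup>2 + (r b)\<^sup>2 + 2 * r a * r b * cos (\<Theta> e))"

definition side_len ::
  "('f \<Rightarrow> nat \<Rightarrow> 'v) \<Rightarrow> ('f \<Rightarrow> nat \<Rightarrow> 'e) \<Rightarrow> ('e \<Rightarrow> real) \<Rightarrow> ('v \<Rightarrow> real) \<Rightarrow> 'f \<Rightarrow> nat \<Rightarrow> real" where
  "side_len vert edge \<Theta> r f c = edge_len \<Theta> r (vert f c) (vert f (nxt c)) (edge f c)"

text \<open>Euclidean inner angle at corner c of face f (law of cosines); the side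
opposite corner c is side (c+1) mod 3.\<close>
definition corner_angle ::
  "('f \<Rightarrow> nat \<Rightarrow> 'v) \<Rightarrow> ('f \<Rightarrow> nat \<Rightarrow> 'e) \<Rightarrow> ('e \<Rightarrow> real) \<Rightarrow> ('v \<Rightarrow> real) \<Rightarrow> 'f \<Rightarrow> nat \<Rightarrow> real" where
  "corner_angle vert edge \<Theta> r f c =
     (let la = side_len vert edge \<Theta> r f c;
          lb = side_len vert edge \<Theta> r f (nxt (nxt c));
          lo = side_len vert edge \<Theta> r f (nxt c)
      in arccos ((la\<^sup>2 + lb\<^sup>2 - lo\<^sup>2) / (2 * la * lb)))"

definition cone_angle ::
  "'f set \<Rightarrow> ('f \<Rightarrow> nat \<Rightarrow> 'v) \<Rightarrow> ('f \<Rightarrow> nat \<Rightarrow> 'e) \<Rightarrow> ('e \<Rightarrow> real) \<Rightarrow> ('v \<Rightarrow> real) \<Rightarrow> 'v \<Rightarrow> real" where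
  "cone_angle F vert edge \<Theta> r v =
     (\<Sum>(f, c)\<in>corners_at F vert v. corner_angle vert edge \<Theta> r f c)"

definition curvature ::
  "'f set \<Rightarrow> ('f \<Rightarrow> nat \<Rightarrow> 'v) \<Rightarrow> ('f \<Rightarrow> nat \<Rightarrow> 'e) \<Rightarrow> ('e \<Rightarrow> real) \<Rightarrow> ('v \<Rightarrow> real) \<Rightarrow> 'v \<Rightarrow> real" where
  "curvature F vert edge \<Theta> r v =
     (if boundary_vertex F vert edge v then pi else 2 * pi) - cone_angle F vert edge \<Theta> r v"

definition curv_map ::
  "'f set \<Rightarrow> ('f \<Rightarrow> nat \<Rightarrow> 'v::finite) \<Rightarrow> ('f \<Rightarrow> nat \<Rightarrow> 'e) \<Rightarrow> ('e \<Rightarrow> real) \<Rightarrow> real^'v \<Rightarrow> real^'v" where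
  "curv_map F vert edge \<Theta> u = (\<chi> v. curvature F vert edge \<Theta> (\<lambda>w. exp (u $ w)) v)"

end

theory Submission
  imports Defs
begin


definition Lsq :: "real \<Rightarrow> real \<Rightarrow> real \<Rightarrow> real" where
  "Lsq x y c = x\<^sup>2 + y\<^sup>2 + 2*x*y*c"

definition Qf :: "real \<Rightarrow> real \<Rightarrow> real \<Rightarrow> real \<Rightarrow> real \<Rightarrow> real \<Rightarrow> real" where
  "Qf x y z c b a = x\<^sup>2*y\<^sup>2*(1-c\<^sup>2) + x\<^sup>2*z\<^sup>2*(1-b\<^sup>2) + y\<^sup>2*z\<^sup>2*(1-a\<^sup>2)
     + 2*x*y*z*(x*(a+b*c) + y*(b+a*c) + z*(c+a*b))"

definition Wf :: "real \<Rightarrow> real \<Rightarrow> real \<Rightarrow> real \<Rightarrow> real \<Rightarrow> real \<Rightarrow> real" where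
  "Wf x y z c b a = 2*x*y*(x*y*(1-c\<^sup>2) + z*(x*(a+b*c) + y*(b+a*c))) / (Lsq x y c * sqrt (4 * Qf x y z c b a))"

lemma Lsq_sym: "Lsq y x c = Lsq x y c"
  unfolding Lsq_def by algebra

lemma Qf_sym1: "Qf y x z c a b = Qf x y z c b a"
  unfolding Qf_def by algebra

lemma Qf_sym2: "Qf x z y b c a = Qf x y z c b a"
  unfolding Qf_def by algebra

lemma Wf_sym: "Wf y x z c a b = Wf x y z c b a"
proof -
  have "2*y*x*(y*x*(1-c\<^sup>2) + z*(y*(b+a*c) + x*(a+b*c))) = 2*x*y*(x*y*(1-c\<^sup>2) + z*(x*(a+b*c) + y*(b+a*c)))" by algebra
  then show ?thesis unfolding Wf_def Lsq_sym[of y x c] Qf_sym1[of y x z c a b] by simp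
qed

lemma delta_eq: "4 * Lsq x y c * Lsq x z b - (Lsq x y c + Lsq x z b - Lsq y z a)\<^sup>2 = 4 * Qf x y z c b a"
  unfolding Lsq_def Qf_def by (simp add: power2_eq_square algebra_simps)

lemma Lsq_nonneg: assumes "\<bar>c\<bar> \<le> 1" shows "0 \<le> Lsq x y c"
proof -
  have "Lsq x y c = (x + y*c)\<^sup>2 + y\<^sup>2*(1 - c\<^sup>2)" unfolding Lsq_def by algebra
  moreover have "c\<^sup>2 \<le> 1" using assms by (simp add: abs_square_le_1)
  ultimately show ?thesis by simp
qed

lemma Lsq_pos: assumes "x > 0" "y > 0" "c > -1" shows "0 < Lsq x y c"
proof -
  have "Lsq x y c = (x - y)\<^sup>2 + 2*x*y*(1+c)" unfolding Lsq_def by algebra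
  moreover have "2*x*y*(1+c) > 0" using assms by simp
  ultimately show ?thesis by (smt (verit) zero_le_power2)
qed

lemma Qf_pos:
  assumes "x > 0" "y > 0" "z > 0" "-1 < a" "a \<le> 1" "-1 < b" "b \<le> 1" "-1 < c" "c \<le> 1"
    "a + b*c \<ge> 0" "b + a*c \<ge> 0" "c + a*b \<ge> 0"
  shows "Qf x y z c b a > 0"
proof -
  have t1: "x\<^sup>2*y\<^sup>2*(1-c\<^sup>2) \<ge> 0" using assms by (simp add: abs_square_le_1)
  have t2: "x\<^sup>2*z\<^sup>2*(1-b\<^sup>2) \<ge> 0" using assms by (simp add: abs_square_le_1)
  have t3: "y\<^sup>2*z\<^sup>2*(1-a\<^sup>2) \<ge> 0" using assms by (simp add: abs_square_le_1)
  have t4: "2*x*y*z*(x*(a+b*c) + y*(b+a*c) + z*(c+a*b)) \<ge> 0" using assms by simp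
  show ?thesis
  proof (cases "c < 1")
    case True
    then have "1 - c\<^sup>2 > 0" using assms by (simp add: abs_square_less_1)
    then have "x\<^sup>2*y\<^sup>2*(1-c\<^sup>2) > 0" using assms by simp
    then show ?thesis unfolding Qf_def using t2 t3 t4 by linarith
  next
    case False
    then have c1: "c = 1" using assms by simp
    have "x*(a+b*c) + y*(b+a*c) + z*(c+a*b) > 0"
    proof -
      have p1: "(1+a)*(1+b) > 0" using assms(4,6) by (intro mult_pos_pos) linarith+
      have p2: "(1-a)*(1-b) \<ge> 0" using assms(5,7) by (intro mult_nonneg_nonneg) linarith+
      have "(1+a)*(1+b) + (1-a)*(1-b) = 2 + 2*(a*b)" by (simp add: algebra_simps)
      then have "1 + a*b > 0" using p1 p2 by linarith
      then have "c+a*b > 0" using c1 by simp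
      then have "z*(c+a*b) > 0" using assms(3) by (rule mult_pos_pos[rotated])
      moreover have "x*(a+b*c) \<ge> 0" using assms(1,10) by simp
      moreover have "y*(b+a*c) \<ge> 0" using assms(2,11) by simp
      ultimately show ?thesis by linarith
    qed
    then have "2*x*y*z*(x*(a+b*c) + y*(b+a*c) + z*(c+a*b)) > 0" using assms by simp
    then show ?thesis unfolding Qf_def using t1 t2 t3 by linarith
  qed
qed



lemma arccos_corner_deriv:
  fixes A B C :: "'a::real_normed_vector \<Rightarrow> real"
  assumes dA: "(A has_derivative dA) (at u)" and dB: "(B has_derivative dB) (at u)"
    and dC: "(C has_derivative dC) (at u)"
    and pA: "A u > 0" and pB: "B u > 0" and D: "4*A u*B u - (A u + B u - C u)\<^sup>2 > 0"
  shows "((\<lambda>w. arccos ((A w + B w - C w)/(2* sqrt (A w)* sqrt (B w)))) has_derivative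
     (\<lambda>h. -(dA h + dB h - dC h - (A u + B u - C u)/2*(dA h/A u + dB h/B u))
             / sqrt (4*A u*B u - (A u + B u - C u)\<^sup>2))) (at u)"
proof -
  define sa where "sa = sqrt (A u)"
  define pb where "pb = sqrt (B u)"
  define N where "N = A u + B u - C u"
  define t where "t = N / (2 * sa * pb)"
  have s2: "sa\<^sup>2 = A u" and sp: "sa > 0" unfolding sa_def using pA by simp_all
  have p2: "pb\<^sup>2 = B u" and pp: "pb > 0" unfolding pb_def using pB by simp_all
  have "1 - t\<^sup>2 = (4*A u*B u - N\<^sup>2) / (2 * sa * pb)\<^sup>2"
    unfolding t_def using sp pp pA pB by (simp add: field_simps power_mult_distrib s2 p2)
  then have st: "sqrt (1 - t\<^sup>2) = sqrt (4*A u*B u - N\<^sup>2) / (2 * sa * pb)"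
    using sp pp by (simp add: real_sqrt_divide)
  have "t\<^sup>2 < 1"
  proof -
    have "(4*A u*B u - N\<^sup>2) / (2 * sa * pb)\<^sup>2 > 0" using D sp pp unfolding N_def by simp
    then show ?thesis using \<open>1 - t\<^sup>2 = _\<close> by linarith
  qed
  then have "\<bar>t\<bar> < 1" using abs_square_less_1 by blast
  then have t1: "-1 < t" "t < 1" by auto
  have sA: "((\<lambda>w. sqrt (A w)) has_derivative (\<lambda>h. dA h * (inverse sa / 2))) (at u)"
    using DERIV_compose_FDERIV[OF DERIV_real_sqrt[OF pA] dA] unfolding sa_def .
  have sB: "((\<lambda>w. sqrt (B w)) has_derivative (\<lambda>h. dB h * (inverse pb / 2))) (at u)"
    using DERIV_compose_FDERIV[OF DERIV_real_sqrt[OF pB] dB] unfolding pb_def .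
  define dt where "dt = (\<lambda>h. ((dA h + dB h - dC h) * (2 * sa * pb) - N * (2 * sa * (dB h * (inverse pb / 2)) + 2 * (dA h * (inverse sa / 2)) * pb)) / ((2 * sa * pb) * (2 * sa * pb)))"
  have tder: "((\<lambda>w. (A w + B w - C w)/(2 * sqrt (A w) * sqrt (B w))) has_derivative dt) (at u)"
  proof -
    have "((\<lambda>w. 2 * sqrt (A w) * sqrt (B w)) has_derivative
       (\<lambda>h. 2 * sqrt (A u) * (dB h * (inverse pb / 2)) + (2 * (dA h * (inverse sa / 2)) + 0 * sqrt (A u)) * sqrt (B u))) (at u)"
      by (intro has_derivative_mult has_derivative_const sA sB)
    then have m: "((\<lambda>w. 2 * sqrt (A w) * sqrt (B w)) has_derivative
       (\<lambda>h. 2 * sa * (dB h * (inverse pb / 2)) + 2 * (dA h * (inverse sa / 2)) * pb)) (at u)"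
      unfolding sa_def pb_def by (simp add: algebra_simps)
    have n: "((\<lambda>w. A w + B w - C w) has_derivative (\<lambda>h. dA h + dB h - dC h)) (at u)"
      by (intro has_derivative_diff has_derivative_add dA dB dC)
    have "2 * sqrt (A u) * sqrt (B u) \<noteq> 0" using sp pp unfolding sa_def pb_def by simp
    from has_derivative_divide'[OF n m this] show ?thesis
      unfolding dt_def N_def sa_def pb_def by simp
  qed
  have tu: "(A u + B u - C u)/(2 * sqrt (A u) * sqrt (B u)) = t" unfolding t_def N_def sa_def pb_def ..
  have ar: "((\<lambda>w. arccos ((A w + B w - C w)/(2 * sqrt (A w) * sqrt (B w)))) has_derivative
     (\<lambda>h. dt h * inverse (- sqrt (1 - t\<^sup>2)))) (at u)"
  proof -
    have t1': "-1 < (A u + B u - C u)/(2 * sqrt (A u) * sqrt (B u))" "(A u + B u - C u)/(2 * sqrt (A u) * sqrt (B u)) < 1"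
      using t1 tu by simp_all
    show ?thesis using DERIV_compose_FDERIV[OF DERIV_arccos[OF t1'] tder] unfolding tu .
  qed
  show ?thesis
  proof (rule has_derivative_eq_rhs[OF ar], rule ext)
    fix h
    have Dp: "sqrt (4*A u*B u - N\<^sup>2) > 0" using D unfolding N_def by simp
    { fix Sq :: real assume Sq: "Sq > 0"
      have "dt h * inverse (- (Sq / (2 * sa * pb))) = -(dA h + dB h - dC h - N/2*(dA h/sa\<^sup>2 + dB h/pb\<^sup>2))/Sq"
        unfolding dt_def using sp pp Sq by (simp add: field_simps power2_eq_square) }
    note eq = this[OF Dp]
    show "dt h * inverse (- sqrt (1 - t\<^sup>2)) = -(dA h + dB h - dC h - (A u + B u - C u)/2*(dA h/A u + dB h/B u))
             / sqrt (4*A u*B u - (A u + B u - C u)\<^sup>2)"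
      unfolding st using eq unfolding s2 p2 N_def .
  qed
qed


lemma corner_alg:
  fixes x y z a b c hi hj hk A B C S :: real
  assumes A: "A = Lsq x y c" and B: "B = Lsq x z b" and C: "C = Lsq y z a"
    and nz: "A \<noteq> 0" "B \<noteq> 0" "S \<noteq> 0"
  shows "-(((2*x\<^sup>2+2*x*y*c)*hi + (2*y\<^sup>2+2*x*y*c)*hj) + ((2*x\<^sup>2+2*x*z*b)*hi + (2*z\<^sup>2+2*x*z*b)*hk)
           - ((2*y\<^sup>2+2*y*z*a)*hj + (2*z\<^sup>2+2*y*z*a)*hk)
          - (A+B-C)/2*(((2*x\<^sup>2+2*x*y*c)*hi + (2*y\<^sup>2+2*x*y*c)*hj)/A + ((2*x\<^sup>2+2*x*z*b)*hi + (2*z\<^sup>2+2*x*z*b)*hk)/B))/S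
    = 2*x*y*(x*y*(1-c\<^sup>2) + z*(x*(a+b*c)+y*(b+a*c)))/(A*S)*(hj-hi)
      + 2*x*z*(x*z*(1-b\<^sup>2) + y*(x*(a+c*b) + z*(c+a*b)))/(B*S)*(hk-hi)"
proof -
  have e: "-(((2*x\<^sup>2+2*x*y*c)*hi + (2*y\<^sup>2+2*x*y*c)*hj) + ((2*x\<^sup>2+2*x*z*b)*hi + (2*z\<^sup>2+2*x*z*b)*hk)
           - ((2*y\<^sup>2+2*y*z*a)*hj + (2*z\<^sup>2+2*y*z*a)*hk)) * (2*A*B)
          + (A+B-C)*(((2*x\<^sup>2+2*x*y*c)*hi + (2*y\<^sup>2+2*x*y*c)*hj)*B + ((2*x\<^sup>2+2*x*z*b)*hi + (2*z\<^sup>2+2*x*z*b)*hk)*A)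
    = 2*(2*x*y*(x*y*(1-c\<^sup>2) + z*(x*(a+b*c)+y*(b+a*c)))*B*(hj-hi)
      + 2*x*z*(x*z*(1-b\<^sup>2) + y*(x*(a+c*b) + z*(c+a*b)))*A*(hk-hi))"
    unfolding A B C Lsq_def by algebra
  let ?L = "-(((2*x\<^sup>2+2*x*y*c)*hi + (2*y\<^sup>2+2*x*y*c)*hj) + ((2*x\<^sup>2+2*x*z*b)*hi + (2*z\<^sup>2+2*x*z*b)*hk)
           - ((2*y\<^sup>2+2*y*z*a)*hj + (2*z\<^sup>2+2*y*z*a)*hk)) * (2*A*B)
          + (A+B-C)*(((2*x\<^sup>2+2*x*y*c)*hi + (2*y\<^sup>2+2*x*y*c)*hj)*B + ((2*x\<^sup>2+2*x*z*b)*hi + (2*z\<^sup>2+2*x*z*b)*hk)*A)"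
  let ?R = "2*(2*x*y*(x*y*(1-c\<^sup>2) + z*(x*(a+b*c)+y*(b+a*c)))*B*(hj-hi)
      + 2*x*z*(x*z*(1-b\<^sup>2) + y*(x*(a+c*b) + z*(c+a*b)))*A*(hk-hi))"
  have l: "-(((2*x\<^sup>2+2*x*y*c)*hi + (2*y\<^sup>2+2*x*y*c)*hj) + ((2*x\<^sup>2+2*x*z*b)*hi + (2*z\<^sup>2+2*x*z*b)*hk)
           - ((2*y\<^sup>2+2*y*z*a)*hj + (2*z\<^sup>2+2*y*z*a)*hk)
          - (A+B-C)/2*(((2*x\<^sup>2+2*x*y*c)*hi + (2*y\<^sup>2+2*x*y*c)*hj)/A + ((2*x\<^sup>2+2*x*z*b)*hi + (2*z\<^sup>2+2*x*z*b)*hk)/B))/S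
     = ?L / (2*A*B*S)"
    using nz by (simp add: field_simps)
  have r: "2*x*y*(x*y*(1-c\<^sup>2) + z*(x*(a+b*c)+y*(b+a*c)))/(A*S)*(hj-hi)
      + 2*x*z*(x*z*(1-b\<^sup>2) + y*(x*(a+c*b) + z*(c+a*b)))/(B*S)*(hk-hi) = ?R / (2*A*B*S)"
    using nz by (simp add: field_simps)
  show ?thesis unfolding l r e ..
qed

lemma exp_nth_deriv: "((\<lambda>w::real^'v. exp (w$i)) has_derivative (\<lambda>h. h$i * exp (u$i))) (at u)"
proof -
  have "((\<lambda>w::real^'v. w$i) has_derivative (\<lambda>h. h$i)) (at u)"
    by (rule bounded_linear_imp_has_derivative) (rule bounded_linear_vec_nth)
  from DERIV_compose_FDERIV[OF DERIV_exp this] show ?thesis .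
qed

lemma Lsq_deriv:
  "((\<lambda>w::real^'v. Lsq (exp (w$i)) (exp (w$j)) c) has_derivative
     (\<lambda>h. (2*(exp (u$i))\<^sup>2 + 2*exp (u$i)*exp (u$j)*c)*h$i + (2*(exp (u$j))\<^sup>2 + 2*exp (u$i)*exp (u$j)*c)*h$j)) (at u)"
proof -
  have e: "(\<lambda>w::real^'v. Lsq (exp (w$i)) (exp (w$j)) c) =
     (\<lambda>w. exp (w$i)*exp (w$i) + exp (w$j)*exp (w$j) + 2*exp (w$i)*exp (w$j)*c)"
    by (simp add: Lsq_def power2_eq_square)
  show ?thesis unfolding e
    apply (rule has_derivative_eq_rhs)
     apply (rule has_derivative_add has_derivative_mult has_derivative_const exp_nth_deriv)+
    apply (rule ext)
    apply (simp add: algebra_simps power2_eq_square)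
    done
qed



lemma corner_deriv:
  fixes u :: "real^'v" and i j k :: 'v and a b c :: real
  assumes ab: "-1 < a" "a \<le> 1" "-1 < b" "b \<le> 1" "-1 < c" "c \<le> 1"
    "a + b*c \<ge> 0" "b + a*c \<ge> 0" "c + a*b \<ge> 0"
  shows "((\<lambda>w. arccos ((Lsq (exp (w$i)) (exp (w$j)) c + Lsq (exp (w$i)) (exp (w$k)) b - Lsq (exp (w$j)) (exp (w$k)) a)
            / (2 * sqrt (Lsq (exp (w$i)) (exp (w$j)) c) * sqrt (Lsq (exp (w$i)) (exp (w$k)) b))))
         has_derivative (\<lambda>h. Wf (exp (u$i)) (exp (u$j)) (exp (u$k)) c b a * (h$j - h$i)
                             + Wf (exp (u$i)) (exp (u$k)) (exp (u$j)) b c a * (h$k - h$i))) (at u)"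
proof -
  define x where "x = exp (u$i)"
  define y where "y = exp (u$j)"
  define z where "z = exp (u$k)"
  have xyz: "x > 0" "y > 0" "z > 0" unfolding x_def y_def z_def by simp_all
  have pA: "Lsq x y c > 0" using Lsq_pos xyz ab by simp
  have pB: "Lsq x z b > 0" using Lsq_pos xyz ab by simp
  have Q: "Qf x y z c b a > 0" using Qf_pos[OF xyz ab] .
  have D: "4 * Lsq x y c * Lsq x z b - (Lsq x y c + Lsq x z b - Lsq y z a)\<^sup>2 > 0"
    unfolding delta_eq using Q by simp
  have S: "sqrt (4 * Qf x y z c b a) \<noteq> 0" using Q by simp
  note r = arccos_corner_deriv[OF Lsq_deriv[of i j c u] Lsq_deriv[of i k b u] Lsq_deriv[of j k a u],
     folded x_def y_def z_def, OF pA pB D]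
  show ?thesis
    apply (rule has_derivative_eq_rhs[OF r])
    apply (rule ext)
    subgoal for h
      unfolding x_def[symmetric] y_def[symmetric] z_def[symmetric] delta_eq Wf_def Qf_sym2[of x y z c b a]
      by (rule corner_alg[OF refl refl refl]) (use pA pB S Qf_sym2[of x y z c b a] in simp_all)
    done
qed



lemma nxt_lt: "c < 3 \<Longrightarrow> nxt c < 3"
  unfolding nxt_def by simp

lemma nxt3: "c < 3 \<Longrightarrow> nxt (nxt (nxt c)) = c"
  unfolding nxt_def by (cases c; cases "c - 1"; auto)

lemma nxt_vals: "nxt 0 = 1" "nxt 1 = 2" "nxt 2 = 0" "nxt (Suc 0) = 2"
  unfolding nxt_def by simp_all

lemma Wf_nonneg:
  assumes "x > 0" "y > 0" "z > 0" "-1 < a" "a \<le> 1" "-1 < b" "b \<le> 1" "-1 < c" "c \<le> 1"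
    "a + b*c \<ge> 0" "b + a*c \<ge> 0" "c + a*b \<ge> 0"
  shows "Wf x y z c b a \<ge> 0"
proof -
  have Q: "Qf x y z c b a > 0" using Qf_pos assms by blast
  have L: "Lsq x y c > 0" using Lsq_pos assms by blast
  have "c\<^sup>2 \<le> 1" using assms by (simp add: abs_square_le_1)
  then have "x*y*(1-c\<^sup>2) \<ge> 0" using assms by simp
  moreover have "z*(x*(a+b*c) + y*(b+a*c)) \<ge> 0" using assms by simp
  ultimately have "2*x*y*(x*y*(1-c\<^sup>2) + z*(x*(a+b*c) + y*(b+a*c))) \<ge> 0" using assms by simp
  moreover have "Lsq x y c * sqrt (4 * Qf x y z c b a) > 0" using Q L by simp
  ultimately show ?thesis unfolding Wf_def by simp
qed

lemma Wf_pos: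
  assumes "x > 0" "y > 0" "z > 0" "-1 < a" "a \<le> 1" "-1 < b" "b \<le> 1" "-1 < c" "c \<le> 1"
    "a + b*c \<ge> 0" "b + a*c \<ge> 0" "c + a*b \<ge> 0" and nz: "c < 1 \<or> a + b*c > 0"
  shows "Wf x y z c b a > 0"
proof -
  have Q: "Qf x y z c b a > 0" using Qf_pos assms by blast
  have L: "Lsq x y c > 0" using Lsq_pos assms by blast
  have t1: "x*y*(1-c\<^sup>2) \<ge> 0" using assms by (simp add: abs_square_le_1)
  have t2: "z*(x*(a+b*c)) \<ge> 0" "z*(y*(b+a*c)) \<ge> 0" using assms by simp_all
  have "x*y*(1-c\<^sup>2) + z*(x*(a+b*c) + y*(b+a*c)) > 0"
  proof (cases "c < 1")
    case True
    then have "1 - c\<^sup>2 > 0" using assms by (simp add: abs_square_less_1)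
    then have "x*y*(1-c\<^sup>2) > 0" using assms by simp
    then show ?thesis using t2 by (simp add: distrib_left)
  next
    case False
    then have "a + b*c > 0" using nz by simp
    then have "z*(x*(a+b*c)) > 0" using assms by simp
    then show ?thesis using t1 t2 by (simp add: distrib_left)
  qed
  then have "2*x*y*(x*y*(1-c\<^sup>2) + z*(x*(a+b*c) + y*(b+a*c))) > 0" using assms by simp
  moreover have "Lsq x y c * sqrt (4 * Qf x y z c b a) > 0" using Q L by simp
  ultimately show ?thesis unfolding Wf_def by simp
qed

lemma zero_conds:
  fixes I0 I1 I2 :: real
  assumes "-1 < I0" "-1 < I1" "-1 < I2"
  shows "\<not> ((I0 = 1 \<and> I1 + I2*I0 = 0) \<and> (I1 = 1 \<and> I2 + I0*I1 = 0))"
    and "\<not> ((I1 = 1 \<and> I2 + I0*I1 = 0) \<and> (I2 = 1 \<and> I0 + I1*I2 = 0))"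
    and "\<not> ((I0 = 1 \<and> I1 + I2*I0 = 0) \<and> (I2 = 1 \<and> I0 + I1*I2 = 0))"
  using assms by auto

locale cpat =
  fixes F :: "'f set" and vert :: "'f \<Rightarrow> nat \<Rightarrow> 'v::finite" and edge :: "'f \<Rightarrow> nat \<Rightarrow> 'e"
    and \<Theta> :: "'e \<Rightarrow> real"
  assumes finF: "finite F"
    and rng: "\<forall>e\<in>edge_set F edge. 0 \<le> \<Theta> e \<and> \<Theta> e < pi"
    and c1: "C1 F edge \<Theta>"
begin

definition I :: "'f \<Rightarrow> nat \<Rightarrow> real" where "I f s = cos (\<Theta> (edge f s))"
definition X :: "real^'v \<Rightarrow> 'f \<Rightarrow> nat \<Rightarrow> real" where "X u f s = exp (u $ vert f s)"
definition ws :: "real^'v \<Rightarrow> 'f \<Rightarrow> nat \<Rightarrow> real" where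
  "ws u f s = Wf (X u f s) (X u f (nxt s)) (X u f (nxt (nxt s))) (I f s) (I f (nxt (nxt s))) (I f (nxt s))"
definition dth :: "real^'v \<Rightarrow> 'f \<Rightarrow> nat \<Rightarrow> real^'v \<Rightarrow> real" where
  "dth u f c h = ws u f c * (h $ vert f (nxt c) - h $ vert f c)
     + ws u f (nxt (nxt c)) * (h $ vert f (nxt (nxt c)) - h $ vert f c)"
definition Lm :: "real^'v \<Rightarrow> real^'v \<Rightarrow> real^'v" where
  "Lm u h = (\<chi> v. - (\<Sum>(f, c)\<in>corners_at F vert v. dth u f c h))"
definition Bf :: "real^'v \<Rightarrow> real^'v \<Rightarrow> real^'v \<Rightarrow> real" where
  "Bf u x y = (\<Sum>f\<in>F. \<Sum>s<3. ws u f s * (y $ vert f s - y $ vert f (nxt s)) * (x $ vert f s - x $ vert f (nxt s)))"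

lemma I_bounds: assumes "f \<in> F" "s < 3" shows "-1 < I f s" "I f s \<le> 1"
proof -
  have "edge f s \<in> edge_set F edge" unfolding edge_set_def using assms by blast
  then have "0 \<le> \<Theta> (edge f s)" "\<Theta> (edge f s) < pi" using rng by auto
  then have "cos pi < cos (\<Theta> (edge f s))" by (intro cos_monotone_0_pi) auto
  then show "-1 < I f s" unfolding I_def by simp
  show "I f s \<le> 1" unfolding I_def by simp
qed

lemma I_c1: assumes "f \<in> F" "s < 3" shows "I f s + I f (nxt s) * I f (nxt (nxt s)) \<ge> 0"
  using c1 assms unfolding C1_def I_def by auto

lemma X_pos: "X u f s > 0" unfolding X_def by simp

lemma corner_eq:
  assumes "c < 3"
  shows "(\<lambda>u. corner_angle vert edge \<Theta> (\<lambda>w. exp (u $ w)) f c) =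
    (\<lambda>w. arccos ((Lsq (exp (w$vert f c)) (exp (w$vert f (nxt c))) (I f c)
                  + Lsq (exp (w$vert f c)) (exp (w$vert f (nxt (nxt c)))) (I f (nxt (nxt c)))
                  - Lsq (exp (w$vert f (nxt c))) (exp (w$vert f (nxt (nxt c)))) (I f (nxt c)))
            / (2 * sqrt (Lsq (exp (w$vert f c)) (exp (w$vert f (nxt c))) (I f c))
                * sqrt (Lsq (exp (w$vert f c)) (exp (w$vert f (nxt (nxt c)))) (I f (nxt (nxt c)))))))"
proof
  fix w :: "real^'v"
  have el: "edge_len \<Theta> r a b e = sqrt (Lsq (r a) (r b) (cos (\<Theta> e)))" for r :: "'v \<Rightarrow> real" and a b e
    unfolding edge_len_def Lsq_def ..
  have sq: "(sqrt (Lsq p q (cos t)))\<^sup>2 = Lsq p q (cos t)" for p q t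
    using Lsq_nonneg[of "cos t" p q] by simp
  show "corner_angle vert edge \<Theta> (\<lambda>w'. exp (w $ w')) f c = arccos ((Lsq (exp (w$vert f c)) (exp (w$vert f (nxt c))) (I f c)
                  + Lsq (exp (w$vert f c)) (exp (w$vert f (nxt (nxt c)))) (I f (nxt (nxt c)))
                  - Lsq (exp (w$vert f (nxt c))) (exp (w$vert f (nxt (nxt c)))) (I f (nxt c)))
            / (2 * sqrt (Lsq (exp (w$vert f c)) (exp (w$vert f (nxt c))) (I f c))
                * sqrt (Lsq (exp (w$vert f c)) (exp (w$vert f (nxt (nxt c)))) (I f (nxt (nxt c))))))"
    unfolding corner_angle_def side_len_def Let_def el sq nxt3[OF assms] I_def
    by (simp add: Lsq_sym[of "exp (w $ vert f (nxt (nxt c)))"])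
qed

lemma corner_hd:
  assumes "f \<in> F" "c < 3"
  shows "((\<lambda>u. corner_angle vert edge \<Theta> (\<lambda>w. exp (u $ w)) f c) has_derivative dth u f c) (at u)"
proof -
  have c1': "nxt c < 3" "nxt (nxt c) < 3" using assms nxt_lt by auto
  note b0 = I_bounds[OF assms(1) assms(2)] and b1 = I_bounds[OF assms(1) c1'(1)] and b2 = I_bounds[OF assms(1) c1'(2)]
  have e0: "I f c + I f (nxt c) * I f (nxt (nxt c)) \<ge> 0" using I_c1[OF assms] .
  have e1: "I f (nxt c) + I f (nxt (nxt c)) * I f c \<ge> 0" using I_c1[OF assms(1) c1'(1)] nxt3[OF assms(2)] by simp
  have e2: "I f (nxt (nxt c)) + I f (nxt c) * I f c \<ge> 0"
    using I_c1[OF assms(1) c1'(2)] nxt3[OF assms(2)] nxt3[OF c1'(1)] by (simp add: mult.commute)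
  note r = corner_deriv[where a="I f (nxt c)" and b="I f (nxt (nxt c))" and c="I f c" and u=u and i="vert f c"
     and j="vert f (nxt c)" and k="vert f (nxt (nxt c))", OF b1 b2 b0 e1 e2 e0]
  show ?thesis unfolding corner_eq[OF assms(2)]
    apply (rule has_derivative_eq_rhs[OF r])
    apply (rule ext)
    unfolding dth_def ws_def X_def nxt3[OF assms(2)] nxt3[OF c1'(1)]
    using Wf_sym[of "exp (u $ vert f c)" "exp (u $ vert f (nxt (nxt c)))" "exp (u $ vert f (nxt c))"
       "I f (nxt (nxt c))" "I f c" "I f (nxt c)"]
    by simp
qed

end


lemma vec_has_derivative:
  fixes G :: "'a::real_normed_vector \<Rightarrow> real^'n"
  assumes "\<And>v. ((\<lambda>w. G w $ v) has_derivative (\<lambda>h. G' h $ v)) (at x)"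
  shows "(G has_derivative G') (at x)"
  apply (subst has_derivative_componentwise_within)
  using assms by (auto simp: Basis_vec_def inner_axis)

context cpat begin

lemma curv_comp_hd:
  "((\<lambda>u. curv_map F vert edge \<Theta> u $ v) has_derivative (\<lambda>h. Lm u h $ v)) (at u)"
proof -
  have fin: "finite (corners_at F vert v)"
  proof -
    have "corners_at F vert v \<subseteq> F \<times> {..<3}" unfolding corners_at_def by auto
    then show ?thesis using finF finite_subset by blast
  qed
  have "((\<lambda>u. \<Sum>p\<in>corners_at F vert v. (case p of (f, c) \<Rightarrow> corner_angle vert edge \<Theta> (\<lambda>w. exp (u $ w)) f c))
         has_derivative (\<lambda>h. \<Sum>p\<in>corners_at F vert v. (case p of (f, c) \<Rightarrow> dth u f c h))) (at u)"
  proof (rule has_derivative_sum)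
    fix p assume "p \<in> corners_at F vert v"
    then obtain f c where p: "p = (f, c)" "f \<in> F" "c < 3" unfolding corners_at_def by auto
    show "((\<lambda>u. case p of (f, c) \<Rightarrow> corner_angle vert edge \<Theta> (\<lambda>w. exp (u $ w)) f c) has_derivative
          (\<lambda>h. case p of (f, c) \<Rightarrow> dth u f c h)) (at u)"
      unfolding p(1) using corner_hd[OF p(2,3)] by simp
  qed
  from has_derivative_diff[OF has_derivative_const this]
  show ?thesis
    unfolding curv_map_def curvature_def cone_angle_def Lm_def by simp
qed

lemma curv_hd: "(curv_map F vert edge \<Theta> has_derivative Lm u) (at u)"
  by (rule vec_has_derivative) (rule curv_comp_hd)

lemma face_sum:
  "(\<Sum>c<3. y $ vert f c * dth u f c x) =
   - (\<Sum>s<3. ws u f s * (y $ vert f s - y $ vert f (nxt s)) * (x $ vert f s - x $ vert f (nxt s)))"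
proof -
  have e: "{..<3::nat} = {0,1,2}" by auto
  show ?thesis unfolding e dth_def by (simp add: nxt_vals algebra_simps)
qed

lemma inner_Lm: "y \<bullet> Lm u x = Bf u x y"
proof -
  define Cor where "Cor = F \<times> {..<3::nat}"
  have finC: "finite Cor" unfolding Cor_def using finF by simp
  have ca: "corners_at F vert v = {p. p \<in> Cor \<and> (\<lambda>(f,c). vert f c) p = v}" for v
    unfolding corners_at_def Cor_def by auto
  have "y \<bullet> Lm u x = (\<Sum>v\<in>UNIV. y $ v * (- (\<Sum>(f, c)\<in>corners_at F vert v. dth u f c x)))"
    unfolding inner_vec_def Lm_def by simp
  also have "\<dots> = - (\<Sum>v\<in>UNIV. \<Sum>p\<in>{p. p \<in> Cor \<and> (\<lambda>(f,c). vert f c) p = v}. (\<lambda>(f,c). y $ vert f c * dth u f c x) p)"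
    unfolding ca by (simp add: sum_distrib_left sum_negf split_def)
  also have "\<dots> = - (\<Sum>p\<in>Cor. (\<lambda>(f,c). y $ vert f c * dth u f c x) p)"
    by (subst sum.group[OF finC]) auto
  also have "\<dots> = - (\<Sum>f\<in>F. \<Sum>c<3. y $ vert f c * dth u f c x)"
    unfolding Cor_def sum.cartesian_product ..
  also have "\<dots> = Bf u x y"
    unfolding face_sum Bf_def by (simp add: sum_negf)
  finally show ?thesis .
qed

lemma Bf_sym: "Bf u x y = Bf u y x"
  unfolding Bf_def by (simp add: algebra_simps)

lemma ws_nonneg: assumes "f \<in> F" "s < 3" shows "ws u f s \<ge> 0"
proof -
  have s': "nxt s < 3" "nxt (nxt s) < 3" using assms nxt_lt by auto
  note b0 = I_bounds[OF assms(1) assms(2)] and b1 = I_bounds[OF assms(1) s'(1)] and b2 = I_bounds[OF assms(1) s'(2)]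
  have e0: "I f s + I f (nxt s) * I f (nxt (nxt s)) \<ge> 0" using I_c1[OF assms] .
  have e1: "I f (nxt s) + I f (nxt (nxt s)) * I f s \<ge> 0" using I_c1[OF assms(1) s'(1)] nxt3[OF assms(2)] by simp
  have e2: "I f (nxt (nxt s)) + I f (nxt s) * I f s \<ge> 0"
    using I_c1[OF assms(1) s'(2)] nxt3[OF assms(2)] nxt3[OF s'(1)] by (simp add: mult.commute)
  show ?thesis unfolding ws_def
    by (rule Wf_nonneg[OF X_pos X_pos X_pos b1 b2 b0 e1 e2 e0])
qed

lemma ws_pos: assumes "f \<in> F" "s < 3" and nz: "\<not> (I f s = 1 \<and> I f (nxt s) + I f (nxt (nxt s)) * I f s = 0)"
  shows "ws u f s > 0"
proof -
  have s': "nxt s < 3" "nxt (nxt s) < 3" using assms nxt_lt by auto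
  note b0 = I_bounds[OF assms(1) assms(2)] and b1 = I_bounds[OF assms(1) s'(1)] and b2 = I_bounds[OF assms(1) s'(2)]
  have e0: "I f s + I f (nxt s) * I f (nxt (nxt s)) \<ge> 0" using I_c1[OF assms(1,2)] .
  have e1: "I f (nxt s) + I f (nxt (nxt s)) * I f s \<ge> 0" using I_c1[OF assms(1) s'(1)] nxt3[OF assms(2)] by simp
  have e2: "I f (nxt (nxt s)) + I f (nxt s) * I f s \<ge> 0"
    using I_c1[OF assms(1) s'(2)] nxt3[OF assms(2)] nxt3[OF s'(1)] by (simp add: mult.commute)
  have "I f s < 1 \<or> I f (nxt s) + I f (nxt (nxt s)) * I f s > 0" using nz b0 e1 by linarith
  then show ?thesis unfolding ws_def
    by (rule Wf_pos[OF X_pos X_pos X_pos b1 b2 b0 e1 e2 e0])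
qed

lemma Bf_nonneg: "Bf u x x \<ge> 0"
  unfolding Bf_def
proof (intro sum_nonneg)
  fix f s assume "f \<in> F" "s \<in> {..<3::nat}"
  then have "ws u f s \<ge> 0" using ws_nonneg by auto
  then show "ws u f s * (x $ vert f s - x $ vert f (nxt s)) * (x $ vert f s - x $ vert f (nxt s)) \<ge> 0"
    by (simp add: mult.assoc)
qed

lemma face_const:
  assumes f: "f \<in> F" and z: "(\<Sum>s<3. ws u f s * (x $ vert f s - x $ vert f (nxt s)) * (x $ vert f s - x $ vert f (nxt s))) = 0"
  shows "x $ vert f 0 = x $ vert f 1 \<and> x $ vert f 1 = x $ vert f 2"
proof -
  have e: "{..<3::nat} = {0,1,2}" by auto
  define d0 where "d0 = x $ vert f 0 - x $ vert f 1"
  define d1 where "d1 = x $ vert f 1 - x $ vert f 2"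
  define d2 where "d2 = x $ vert f 2 - x $ vert f 0"
  have w0: "ws u f 0 \<ge> 0" and w1: "ws u f 1 \<ge> 0" and w2: "ws u f 2 \<ge> 0" using ws_nonneg[OF f] by auto
  have S: "ws u f 0 * (d0 * d0) + ws u f 1 * (d1 * d1) + ws u f 2 * (d2 * d2) = 0"
    using z unfolding e d0_def d1_def d2_def by (simp add: nxt_vals mult.assoc)
  have n0: "ws u f 0 * (d0 * d0) \<ge> 0" using w0 by simp
  have n1: "ws u f 1 * (d1 * d1) \<ge> 0" using w1 by simp
  have n2: "ws u f 2 * (d2 * d2) \<ge> 0" using w2 by simp
  have z0: "ws u f 0 * (d0 * d0) = 0" using S n0 n1 n2 by linarith
  have z1: "ws u f 1 * (d1 * d1) = 0" using S n0 n1 n2 by linarith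
  have z2: "ws u f 2 * (d2 * d2) = 0" using S n0 n1 n2 by linarith
  have bb: "-1 < I f 0" "-1 < I f 1" "-1 < I f 2" using I_bounds[OF f] by auto
  note zc = zero_conds[OF bb]
  have p: "ws u f s > 0" if "s < 3" "\<not> (I f s = 1 \<and> I f (nxt s) + I f (nxt (nxt s)) * I f s = 0)" for s
    using ws_pos[OF f that] .
  have cases: "(ws u f 0 > 0 \<and> ws u f 1 > 0) \<or> (ws u f 1 > 0 \<and> ws u f 2 > 0) \<or> (ws u f 0 > 0 \<and> ws u f 2 > 0)"
  proof -
    have q0: "\<not> (I f 0 = 1 \<and> I f 1 + I f 2 * I f 0 = 0) \<Longrightarrow> ws u f 0 > 0" using p[of 0] by (simp add: nxt_vals)
    have q1: "\<not> (I f 1 = 1 \<and> I f 2 + I f 0 * I f 1 = 0) \<Longrightarrow> ws u f 1 > 0" using p[of 1] by (simp add: nxt_vals)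
    have q2: "\<not> (I f 2 = 1 \<and> I f 0 + I f 1 * I f 2 = 0) \<Longrightarrow> ws u f 2 > 0" using p[of 2] by (simp add: nxt_vals)
    show ?thesis using q0 q1 q2 zc by blast
  qed
  have "d0 = 0 \<and> d1 = 0 \<or> d1 = 0 \<and> d2 = 0 \<or> d0 = 0 \<and> d2 = 0"
    using cases z0 z1 z2 by auto
  then show ?thesis unfolding d0_def d1_def d2_def by auto
qed

end


context cpat begin
lemma face_nonneg: assumes "f \<in> F"
  shows "0 \<le> (\<Sum>s<3. ws u f s * (x $ vert f s - x $ vert f (nxt s)) * (x $ vert f s - x $ vert f (nxt s)))"
proof (intro sum_nonneg)
  fix s assume "s \<in> {..<3::nat}"
  then have "ws u f s \<ge> 0" using ws_nonneg assms by auto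
  then show "ws u f s * (x $ vert f s - x $ vert f (nxt s)) * (x $ vert f s - x $ vert f (nxt s)) \<ge> 0"
    by (simp add: mult.assoc)
qed
end

theorem lemma3p1:
  fixes F :: "'f set" and vert :: "'f \<Rightarrow> nat \<Rightarrow> 'v::finite" and edge :: "'f \<Rightarrow> nat \<Rightarrow> 'e"
    and \<Theta> :: "'e \<Rightarrow> real" and u :: "real^'v"
  assumes "triangulation F vert edge"
    and "\<forall>e\<in>edge_set F edge. 0 \<le> \<Theta> e \<and> \<Theta> e < pi"
    and "C1 F edge \<Theta>"
  shows "curv_map F vert edge \<Theta> differentiable (at u) \<and>
         (let M = matrix (frechet_derivative (curv_map F vert edge \<Theta>) (at u)) in
            transpose M = M \<and>
            (\<forall>x. 0 \<le> x \<bullet> (M *v x)) \<and>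
            (\<forall>x. x \<noteq> 0 \<and> (\<Sum>i\<in>UNIV. x $ i) = 0 \<longrightarrow> 0 < x \<bullet> (M *v x)))"
proof -
  have finF: "finite F" and neF: "F \<noteq> {}" and cov: "\<forall>v. \<exists>f\<in>F. \<exists>c<3. vert f c = v"
    and ori: "\<forall>f\<in>F. \<forall>g\<in>F. \<forall>c<3. \<forall>d<3. edge f c = edge g d \<and> (f, c) \<noteq> (g, d) \<longrightarrow>
         vert f c = vert g (nxt d) \<and> vert f (nxt c) = vert g d"
    and conn: "\<forall>f\<in>F. \<forall>g\<in>F. (f, g) \<in> (face_adj F edge)\<^sup>*"
  proof -
    note T = assms(1)[unfolded triangulation_def]
    show "finite F" by (rule conjunct1[OF T])
    show "F \<noteq> {}" by (rule conjunct1[OF conjunct2[OF T]])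
    show "\<forall>v. \<exists>f\<in>F. \<exists>c<3. vert f c = v" by (rule conjunct1[OF conjunct2[OF conjunct2[OF T]]])
    show "\<forall>f\<in>F. \<forall>g\<in>F. \<forall>c<3. \<forall>d<3. edge f c = edge g d \<and> (f, c) \<noteq> (g, d) \<longrightarrow>
         vert f c = vert g (nxt d) \<and> vert f (nxt c) = vert g d"
      by (rule conjunct1[OF conjunct2[OF conjunct2[OF conjunct2[OF conjunct2[OF T]]]]])
    show "\<forall>f\<in>F. \<forall>g\<in>F. (f, g) \<in> (face_adj F edge)\<^sup>*"
      by (rule conjunct1[OF conjunct2[OF conjunct2[OF conjunct2[OF conjunct2[OF conjunct2[OF T]]]]]])
  qed
  interpret cpat F vert edge \<Theta>
    using finF assms(2,3) by unfold_locales auto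
  have hd: "(curv_map F vert edge \<Theta> has_derivative Lm u) (at u)" by (rule curv_hd)
  have fd: "frechet_derivative (curv_map F vert edge \<Theta>) (at u) = Lm u"
    using frechet_derivative_at[OF hd] by simp
  have bl: "bounded_linear (Lm u)" using has_derivative_bounded_linear[OF hd] .
  define M where "M = matrix (Lm u)"
  have Mv: "M *v x = Lm u x" for x
    using fun_cong[OF matrix_vector_mul(3)[OF bl], of x] unfolding M_def .
  have Mij: "M $ i $ j = Bf u (axis j 1) (axis i 1)" for i j
  proof -
    have "M $ i $ j = Lm u (axis j 1) $ i" unfolding M_def matrix_def by simp
    also have "\<dots> = axis i 1 \<bullet> Lm u (axis j 1)" by (simp add: inner_axis')
    also have "\<dots> = Bf u (axis j 1) (axis i 1)" by (rule inner_Lm)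
    finally show ?thesis .
  qed
  have sym: "transpose M = M"
    unfolding vec_eq_iff transpose_def using Mij Bf_sym by simp
  have psd: "0 \<le> x \<bullet> (M *v x)" for x
    unfolding Mv inner_Lm using Bf_nonneg .
  have pd: "0 < x \<bullet> (M *v x)" if x0: "x \<noteq> 0" and xs: "(\<Sum>i\<in>UNIV. x $ i) = 0" for x
  proof (rule ccontr)
    assume "\<not> 0 < x \<bullet> (M *v x)"
    then have B0: "Bf u x x = 0" using psd[of x] unfolding Mv inner_Lm by simp
    have fz: "(\<Sum>s<3. ws u f s * (x $ vert f s - x $ vert f (nxt s)) * (x $ vert f s - x $ vert f (nxt s))) = 0"
      if "f \<in> F" for f
    proof -
      let ?g = "\<lambda>f. (\<Sum>s<3. ws u f s * (x $ vert f s - x $ vert f (nxt s)) * (x $ vert f s - x $ vert f (nxt s)))"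
      have "sum ?g F = 0" using B0 unfolding Bf_def .
      then have "\<forall>f\<in>F. ?g f = 0" using sum_nonneg_eq_0_iff[OF finF, of ?g] face_nonneg by simp
      then show ?thesis using that by simp
    qed
    have fc: "x $ vert f c = x $ vert f 0" if "f \<in> F" "c < 3" for f c
    proof -
      have "c = 0 \<or> c = 1 \<or> c = 2" using that(2) by auto
      then show ?thesis using face_const[OF that(1) fz[OF that(1)]] by auto
    qed
    have adj: "x $ vert f 0 = x $ vert g 0" if fg: "(f, g) \<in> face_adj F edge" for f g
    proof -
      obtain c d where cd: "f \<in> F" "g \<in> F" "c < 3" "d < 3" "edge f c = edge g d"
        using fg unfolding face_adj_def by auto
      show ?thesis
      proof (cases "(f, c) = (g, d)")
        case True then show ?thesis by simp
      next
        case False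
        then have "vert f c = vert g (nxt d)" using ori cd by blast
        then show ?thesis using fc[OF cd(1,3)] fc[OF cd(2) nxt_lt[OF cd(4)]] by simp
      qed
    qed
    have star: "x $ vert f 0 = x $ vert g 0" if "(f, g) \<in> (face_adj F edge)\<^sup>*" for f g
      using that
    proof (induction rule: rtrancl_induct)
      case base then show ?case by simp
    next
      case (step g h) then show ?case using adj by simp
    qed
    obtain f0 where f0: "f0 \<in> F" using neF by auto
    have const: "x $ v = x $ vert f0 0" for v
    proof -
      obtain f c where "f \<in> F" "c < 3" "vert f c = v" using cov by blast
      then have "x $ v = x $ vert f 0" using fc by metis
      also have "\<dots> = x $ vert f0 0" using star conn \<open>f \<in> F\<close> f0 by simp
      finally show ?thesis .
    qed
    have "(\<Sum>i\<in>UNIV. x $ i) = (\<Sum>i\<in>(UNIV::'v set). x $ vert f0 0)"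
      by (intro sum.cong refl const)
    also have "\<dots> = real CARD('v) * x $ vert f0 0" by simp
    finally have "x $ vert f0 0 = 0" using xs by simp
    then have "\<forall>v. x $ v = 0" using const by metis
    then have "x = 0" by (simp add: vec_eq_iff)
    then show False using x0 by simp
  qed
  show ?thesis
    unfolding fd Let_def M_def[symmetric]
    using hd sym psd pd by (auto simp: differentiable_def)
qed


end
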